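(* Let $(\Omega,\mathcal F)$ be a measurable space with $\Sigma\neq\emptyset$, and let $v:\mathcal F\to\mathbb R$ be non-decreasing and submodular with $v(\emptyset)=0$. Then $v$ is continuous if and only if both of the following hold: (i) $\lim_{n\to\infty}v(A_n)=v(\bigcup_n A_n)$ for every sequence $A_1\subset A_2\subset\cdots$ in $\mathcal F$; (ii) $\lim_{n\to\infty}v(A_n)=v(\bigcap_n A_n)$ for every sequence $A_1\supset A_2\supset\cdots$ in $\mathcal F$.
   Context: $\Sigma$ denotes the set of all classes $\mathcal I\subset\mathcal F$ that are chains (totally ordered by inclusion), contain $\emptyset$ and $\Omega$, and generate $\mathcal F$ as a $\sigma$-algebra. $v$ is non-decreasing if $v(A)\le v(B)$ for $A\subset B$, submodular if $v(A)+v(B)\ge v(A\cup B)+v(A\cap B)$ for all $A,B\in\mathcal F$. For $\mathcal I\in\Sigma$ let $\mathcal J$ be the algebra generated by $\mathcal I$, whose elements are the sets $\bigcup_{i=1}^n (C_i\cap D_i^c)$ with $C_1\supset D_1\supset\cdots\supset C_n\supset D_n$ in $\mathcal I$; define $\mu_{v,\mathcal I}$ on $\mathcal J$ by $\mu_{v,\mathcal I}(\bigcup_{i=1}^n (C_i\cap D_i^c))=\sum_{i=1}^n(v(C_i)-v(D_i))$. A non-decreasing $v$ is called continuous if for every $\mathcal I\in\Sigma$ the finitely additive $\mu_{v,\mathcal I}$ is $\sigma$-additive on $\mathcal J$. *)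

theory Defs
  imports "HOL-Analysis.Analysis"
begin

definition chain_generators :: "'a measure \<Rightarrow> 'a set set set" where
  "chain_generators M = {I. I \<subseteq> sets M \<and> (\<forall>A\<in>I. \<forall>B\<in>I. A \<subseteq> B \<or> B \<subseteq> A)
      \<and> {} \<in> I \<and> space M \<in> I \<and> sigma_sets (space M) I = sets M}"

definition chain_rep :: "'a set set \<Rightarrow> nat \<Rightarrow> (nat \<Rightarrow> 'a set) \<Rightarrow> (nat \<Rightarrow> 'a set) \<Rightarrow> 'a set \<Rightarrow> bool" where
  "chain_rep I n C D A \<longleftrightarrow>
     (\<forall>i<n. C i \<in> I \<and> D i \<in> I \<and> D i \<subseteq> C i) \<and>
     (\<forall>i. Suc i < n \<longrightarrow> C (Suc i) \<subseteq> D i) \<and>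
     A = (\<Union>i<n. C i - D i)"

definition chain_algebra :: "'a set set \<Rightarrow> 'a set set" where
  "chain_algebra I = {A. \<exists>n C D. chain_rep I n C D A}"

definition mu_chain :: "('a set \<Rightarrow> real) \<Rightarrow> 'a set set \<Rightarrow> 'a set \<Rightarrow> real" where
  "mu_chain v I A = (SOME s. \<exists>n C D. chain_rep I n C D A \<and> s = (\<Sum>i<n. v (C i) - v (D i)))"

definition sigma_additive_on :: "'a set set \<Rightarrow> ('a set \<Rightarrow> real) \<Rightarrow> bool" where
  "sigma_additive_on J \<mu> \<longleftrightarrow> (\<forall>A :: nat \<Rightarrow> 'a set. range A \<subseteq> J \<longrightarrow> disjoint_family A \<longrightarrow>
      (\<Union>i. A i) \<in> J \<longrightarrow> (\<lambda>i. \<mu> (A i)) sums \<mu> (\<Union>i. A i))"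

definition nondecreasing_on :: "'a measure \<Rightarrow> ('a set \<Rightarrow> real) \<Rightarrow> bool" where
  "nondecreasing_on M v \<longleftrightarrow> (\<forall>A\<in>sets M. \<forall>B\<in>sets M. A \<subseteq> B \<longrightarrow> v A \<le> v B)"

definition submodular_on :: "'a measure \<Rightarrow> ('a set \<Rightarrow> real) \<Rightarrow> bool" where
  "submodular_on M v \<longleftrightarrow> (\<forall>A\<in>sets M. \<forall>B\<in>sets M. v A + v B \<ge> v (A \<union> B) + v (A \<inter> B))"

definition continuous_capacity :: "'a measure \<Rightarrow> ('a set \<Rightarrow> real) \<Rightarrow> bool" where
  "continuous_capacity M v \<longleftrightarrow>
     (\<forall>I\<in>chain_generators M. sigma_additive_on (chain_algebra I) (mu_chain v I))"

end

theory Submission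
  imports Defs
begin



definition ivs :: "'a set set \<Rightarrow> 'a set set" where
  "ivs I = {C - D | C D. C \<in> I \<and> D \<in> I \<and> D \<subseteq> C}"

definition muS :: "('a set \<Rightarrow> real) \<Rightarrow> 'a set set \<Rightarrow> 'a set \<Rightarrow> real" where
  "muS v I c = (SOME s. \<exists>C D. C \<in> I \<and> D \<in> I \<and> D \<subseteq> C \<and> c = C - D \<and> s = v C - v D)"

locale chainctx =
  fixes M :: "'a measure" and I :: "'a set set" and v :: "'a set \<Rightarrow> real"
  assumes chain: "\<forall>A\<in>I. \<forall>B\<in>I. A \<subseteq> B \<or> B \<subseteq> A"
    and Isub: "I \<subseteq> sets M" and Iemp: "{} \<in> I"
    and vmono: "nondecreasing_on M v"
begin

lemma ch: "A \<in> I \<Longrightarrow> B \<in> I \<Longrightarrow> A \<subseteq> B \<or> B \<subseteq> A"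
  using chain by blast

lemma I_Int: "A \<in> I \<Longrightarrow> B \<in> I \<Longrightarrow> A \<inter> B \<in> I"
  using ch[of A B] by (auto simp: Int_absorb1 Int_absorb2)

lemma I_Un: "A \<in> I \<Longrightarrow> B \<in> I \<Longrightarrow> A \<union> B \<in> I"
  using ch[of A B] by (auto simp: Un_absorb1 Un_absorb2)

lemma vmono': "A \<in> I \<Longrightarrow> B \<in> I \<Longrightarrow> A \<subseteq> B \<Longrightarrow> v A \<le> v B"
  using vmono Isub unfolding nondecreasing_on_def by blast

lemma iv_half:
  assumes "C \<in> I" "D \<in> I" "C' \<in> I" "D' \<in> I" "D \<subseteq> C" "D' \<subseteq> C'"
    "C - D = C' - D'" "C - D \<noteq> {}"
  shows "C \<subseteq> C'"
proof (rule ccontr)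
  assume nC: "\<not> C \<subseteq> C'"
  then have C'C: "C' \<subseteq> C" using ch[OF assms(1,3)] by blast
  show False
  proof (cases "C' \<subseteq> D")
    case True
    then have "C' - D' = {}" using assms(7) by blast
    then show False using assms(7,8) by simp
  next
    case False
    then have "D \<subseteq> C'" using ch[OF assms(3,2)] by blast
    then obtain y where "y \<in> C" "y \<notin> C'" "y \<notin> D" using nC by blast
    then have "y \<in> C' - D'" using assms(7) by blast
    then show False using \<open>y \<notin> C'\<close> by blast
  qed
qed

lemma iv_unique:
  assumes "C \<in> I" "D \<in> I" "C' \<in> I" "D' \<in> I" "D \<subseteq> C" "D' \<subseteq> C'"
    "C - D = C' - D'" "C - D \<noteq> {}"
  shows "C = C' \<and> D = D'"
proof -
  have "C \<subseteq> C'" using iv_half[OF assms] .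
  moreover have "C' \<subseteq> C" using iv_half[OF assms(3,4,1,2,6,5)] assms(7,8) by simp
  ultimately have CC: "C = C'" by blast
  have "D \<inter> C = D' \<inter> C" using assms(7) CC by blast
  then show ?thesis using CC assms(5,6) by blast
qed

lemma muS_eq:
  assumes "C \<in> I" "D \<in> I" "D \<subseteq> C"
  shows "muS v I (C - D) = v C - v D"
  unfolding muS_def
proof (rule someI2)
  show "\<exists>C' D'. C' \<in> I \<and> D' \<in> I \<and> D' \<subseteq> C' \<and> C - D = C' - D' \<and> v C - v D = v C' - v D'"
    using assms by blast
next
  fix s assume "\<exists>C' D'. C' \<in> I \<and> D' \<in> I \<and> D' \<subseteq> C' \<and> C - D = C' - D' \<and> s = v C' - v D'"
  then obtain C' D' where *: "C' \<in> I" "D' \<in> I" "D' \<subseteq> C'" "C - D = C' - D'" "s = v C' - v D'"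
    by blast
  show "s = v C - v D"
  proof (cases "C - D = {}")
    case True
    have e1: "C = D" using assms True by blast
    have e2: "C' = D'" using *(3,4) True by blast
    have "s = 0" using *(5) e2 by simp
    moreover have "v C - v D = 0" using e1 by simp
    ultimately show ?thesis by simp
  next
    case False
    then show ?thesis using iv_unique[OF assms(1,2) *(1,2) assms(3) *(3,4)] *(5) by simp
  qed
qed

lemma muS_empty: "muS v I {} = 0"
  using muS_eq[OF Iemp Iemp] by simp

lemma muS_nonneg: assumes "c \<in> ivs I" shows "0 \<le> muS v I c"
proof -
  obtain C D where "C \<in> I" "D \<in> I" "D \<subseteq> C" "c = C - D" using assms unfolding ivs_def by blast
  then show ?thesis using muS_eq[of C D] vmono'[of D C] by simp
qed

lemma ivs_sets: "ivs I \<subseteq> sets M"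
  unfolding ivs_def using Isub by blast

lemma semiring: "semiring_of_sets (space M) (ivs I)"
proof
  show "ivs I \<subseteq> Pow (space M)" using ivs_sets sets.sets_into_space by blast
  show "{} \<in> ivs I" unfolding ivs_def using Iemp by blast
next
  fix a b assume "a \<in> ivs I" "b \<in> ivs I"
  then obtain C D C' D' where *: "C \<in> I" "D \<in> I" "D \<subseteq> C" "a = C - D"
    "C' \<in> I" "D' \<in> I" "D' \<subseteq> C'" "b = C' - D'"
    unfolding ivs_def by blast
  have "a \<inter> b = (C \<inter> C') - ((D \<union> D') \<inter> (C \<inter> C'))" using * by auto
  moreover have "C \<inter> C' \<in> I" "(D \<union> D') \<inter> (C \<inter> C') \<in> I"
    using * by (auto intro!: I_Int I_Un)
  ultimately show "a \<inter> b \<in> ivs I" unfolding ivs_def by blast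
  let ?X1 = "C - ((D \<union> C') \<inter> C)"
  let ?X2 = "(C \<inter> D') - (D \<inter> (C \<inter> D'))"
  have m: "(D \<union> C') \<inter> C \<in> I" "C \<inter> D' \<in> I" "D \<inter> (C \<inter> D') \<in> I"
    using * by (auto intro!: I_Int I_Un)
  have X1: "?X1 \<in> ivs I" unfolding ivs_def using * m by blast
  have X2: "?X2 \<in> ivs I" unfolding ivs_def using * m by blast
  have eq: "a - b = ?X1 \<union> ?X2" using * by blast
  have dj: "?X1 \<inter> ?X2 = {}" using * by blast
  show "\<exists>Cs\<subseteq>ivs I. finite Cs \<and> disjoint Cs \<and> a - b = \<Union>Cs"
  proof (intro exI[of _ "{?X1, ?X2}"] conjI)
    show "{?X1, ?X2} \<subseteq> ivs I" using X1 X2 by simp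
    show "finite {?X1, ?X2}" by simp
    show "disjoint {?X1, ?X2}" using dj unfolding disjoint_def by blast
    show "a - b = \<Union>{?X1, ?X2}" using eq by simp
  qed
qed

lemma finite_chain_max:
  assumes "finite F" "F \<noteq> {}" "F \<subseteq> I"
  shows "\<exists>X\<in>F. \<forall>Y\<in>F. Y \<subseteq> X"
  using assms
proof (induction F rule: finite_ne_induct)
  case (singleton x) then show ?case by auto
next
  case (insert x F)
  then obtain X where "X \<in> F" "\<forall>Y\<in>F. Y \<subseteq> X" by auto
  show ?case
  proof (cases "x \<subseteq> X")
    case True
    then show ?thesis using \<open>X \<in> F\<close> \<open>\<forall>Y\<in>F. Y \<subseteq> X\<close> by blast
  next
    case False
    then have "X \<subseteq> x" using ch[of x X] insert.prems \<open>X \<in> F\<close> by blast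
    then show ?thesis using \<open>\<forall>Y\<in>F. Y \<subseteq> X\<close> by blast
  qed
qed


sublocale S: semiring_of_sets "space M" "ivs I" by (rule semiring)

lemma max_piece:
  assumes "Cs \<subseteq> ivs I" "finite Cs" "Cs \<noteq> {}" "{} \<notin> Cs" "disjoint Cs"
  obtains c0 C0 D0 where "c0 \<in> Cs" "C0 \<in> I" "D0 \<in> I" "D0 \<subseteq> C0" "c0 = C0 - D0"
           "\<forall>c\<in>Cs. c \<subseteq> C0" "\<forall>c\<in>Cs - {c0}. c \<subseteq> D0"
proof -
  have "\<forall>c\<in>Cs. \<exists>p. fst p \<in> I \<and> snd p \<in> I \<and> snd p \<subseteq> fst p \<and> c = fst p - snd p"
    using assms(1) unfolding ivs_def by force
  from bchoice[OF this] obtain r where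
    r: "\<forall>c\<in>Cs. fst (r c) \<in> I \<and> snd (r c) \<in> I \<and> snd (r c) \<subseteq> fst (r c) \<and> c = fst (r c) - snd (r c)"
    by blast
  define T where "T c = fst (r c)" for c
  define B where "B c = snd (r c)" for c
  have r': "\<And>c. c \<in> Cs \<Longrightarrow> T c \<in> I \<and> B c \<in> I \<and> B c \<subseteq> T c \<and> c = T c - B c"
    using r unfolding T_def B_def by blast
  have TI: "T ` Cs \<subseteq> I" using r' by blast
  have TF: "finite (T ` Cs)" "T ` Cs \<noteq> {}" using assms(2,3) by auto
  have "\<exists>X\<in>T ` Cs. \<forall>Y\<in>T ` Cs. Y \<subseteq> X" by (rule finite_chain_max[OF TF TI])
  then obtain X where X: "X \<in> T ` Cs" "\<forall>Y\<in>T ` Cs. Y \<subseteq> X" ..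
  then obtain c0 where c0: "c0 \<in> Cs" "X = T c0" by blast
  have top: "\<forall>c\<in>Cs. c \<subseteq> T c0"
  proof
    fix c assume "c \<in> Cs"
    then have "c \<subseteq> T c" "T c \<subseteq> X" using r'[of c] X by auto
    then show "c \<subseteq> T c0" using c0 by simp
  qed
  have rest: "\<forall>c\<in>Cs - {c0}. c \<subseteq> B c0"
  proof
    fix c assume c: "c \<in> Cs - {c0}"
    have cne: "c \<noteq> {}" "c0 \<noteq> {}" using c c0 assms(4) by auto
    have dj: "c \<inter> c0 = {}" using assms(5) c c0 unfolding disjoint_def by blast
    have rc: "T c \<in> I" "B c \<in> I" "B c \<subseteq> T c" "c = T c - B c" using r'[of c] c by auto
    have rc0: "T c0 \<in> I" "B c0 \<in> I" "B c0 \<subseteq> T c0" "c0 = T c0 - B c0" using r'[of c0] c0 by auto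
    have Tc: "T c \<subseteq> T c0" using X c c0 by auto
    have "T c \<subseteq> B c0"
    proof (rule ccontr)
      assume nt: "\<not> T c \<subseteq> B c0"
      then have "B c0 \<subseteq> T c" using ch[OF rc(1) rc0(2)] by blast
      show False
      proof (cases "B c \<subseteq> B c0")
        case True
        then obtain y where "y \<in> T c" "y \<notin> B c0" using nt by blast
        then have "y \<in> c" "y \<in> c0" using True rc rc0 Tc by blast+
        then show False using dj by blast
      next
        case False
        then have "B c0 \<subseteq> B c" using ch[OF rc(2) rc0(2)] by blast
        obtain y where "y \<in> c" using cne by blast
        then have "y \<in> c0" using rc rc0 Tc \<open>B c0 \<subseteq> B c\<close> by blast
        then show False using dj \<open>y \<in> c\<close> by blast
      qed
    qed
    then show "c \<subseteq> B c0" using rc by blast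
  qed
  have rc0: "T c0 \<in> I" "B c0 \<in> I" "B c0 \<subseteq> T c0" "c0 = T c0 - B c0" using r'[of c0] c0 by auto
  show thesis by (rule that[OF c0(1) rc0 top rest])
qed

lemma sum_drop_empty:
  assumes "finite Cs"
  shows "(\<Sum>c\<in>Cs. muS v I c) = (\<Sum>c\<in>Cs - {{}}. muS v I c)"
proof (cases "{} \<in> Cs")
  case True
  then show ?thesis using sum.remove[OF assms True, of "muS v I"] muS_empty by simp
next
  case False
  then show ?thesis by simp
qed

lemma ivs_additive:
  assumes "Cs \<subseteq> ivs I" "finite Cs" "{} \<notin> Cs" "disjoint Cs" "C \<in> I" "D \<in> I" "D \<subseteq> C"
    "\<Union>Cs = C - D"
  shows "v C - v D = (\<Sum>c\<in>Cs. muS v I c)"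
  using assms
proof (induction "card Cs" arbitrary: Cs C D rule: less_induct)
  case less
  have U1: "\<forall>c\<in>Cs. c \<subseteq> C - D"
  proof
    fix c assume "c \<in> Cs"
    then have "c \<subseteq> \<Union>Cs" by blast
    then show "c \<subseteq> C - D" unfolding less.prems(8) .
  qed
  have U2: "C - D \<subseteq> \<Union>Cs" unfolding less.prems(8) by (rule subset_refl)
  show ?case
  proof (cases "Cs = {}")
    case True
    then have "C - D = {}" using U2 by simp
    then have "C = D" using less.prems(7) by blast
    then show ?thesis using True by simp
  next
    case False
    obtain c0 C0 D0 where
      p: "c0 \<in> Cs" "C0 \<in> I" "D0 \<in> I" "D0 \<subseteq> C0" "c0 = C0 - D0"
        "\<forall>c\<in>Cs. c \<subseteq> C0" "\<forall>c\<in>Cs - {c0}. c \<subseteq> D0"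
      by (rule max_piece[OF less.prems(1,2) False less.prems(3,4)])
    have c0ne: "C0 - D0 \<noteq> {}"
    proof
      assume e: "C0 - D0 = {}"
      have "C0 - D0 \<in> Cs" using p(1) unfolding p(5) .
      then have "{} \<in> Cs" unfolding e .
      then show False using less.prems(3) by simp
    qed
    have a: "C - D \<subseteq> C0" using p(6) U2 by blast
    have b: "C0 - D0 \<subseteq> C - D" using p(1) U1 unfolding p(5) by blast
    have C0C: "C0 \<subseteq> C"
    proof (rule ccontr)
      assume n: "\<not> C0 \<subseteq> C"
      show False
      proof (cases "D0 \<subseteq> C")
        case True
        then show False using n b by blast
      next
        case False
        then have "C \<subseteq> D0" using ch[OF less.prems(5) p(3)] by blast
        then show False using b c0ne by blast
      qed
    qed
    have DC0: "D \<subseteq> C0"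
    proof (rule ccontr)
      assume "\<not> D \<subseteq> C0"
      then have "C0 \<subseteq> D" using ch[OF less.prems(6) p(2)] by blast
      then show False using b c0ne by blast
    qed
    have CC0: "C = C0" using a DC0 C0C by blast
    have DD0: "D \<subseteq> D0"
    proof (rule ccontr)
      assume n: "\<not> D \<subseteq> D0"
      then obtain y where "y \<in> D" "y \<notin> D0" by blast
      then show False using DC0 b by blast
    qed
    let ?R = "Cs - {c0}"
    have UR: "\<Union>?R = D0 - D"
    proof
      show "\<Union>?R \<subseteq> D0 - D" using p(7) U1 by blast
      show "D0 - D \<subseteq> \<Union>?R"
      proof
        fix y assume y: "y \<in> D0 - D"
        then have "y \<in> C - D" using C0C p(4) by blast
        then have "y \<in> \<Union>Cs" using U2 by blast
        moreover have "y \<notin> c0" using y unfolding p(5) by blast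
        ultimately show "y \<in> \<Union>?R" by blast
      qed
    qed
    have cardR: "card ?R < card Cs" by (rule card_Diff1_less[OF less.prems(2) p(1)])
    have R1: "?R \<subseteq> ivs I" using less.prems(1) by blast
    have R2: "finite ?R" using less.prems(2) by simp
    have R3: "{} \<notin> ?R" using less.prems(3) by blast
    have R4: "disjoint ?R" using less.prems(4) by (rule pairwise_subset) blast
    have IH: "v D0 - v D = (\<Sum>c\<in>?R. muS v I c)"
      by (rule less.hyps[OF cardR R1 R2 R3 R4 p(3) less.prems(6) DD0 UR])
    have S: "(\<Sum>c\<in>Cs. muS v I c) = muS v I c0 + (\<Sum>c\<in>?R. muS v I c)"
      by (rule sum.remove[OF less.prems(2) p(1)])
    have m0: "muS v I c0 = v C0 - v D0" unfolding p(5) by (rule muS_eq[OF p(2,3,4)])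
    have vC: "v C = v C0" using CC0 by (rule arg_cong)
    show ?thesis using S m0 IH vC by linarith
  qed
qed

end




lemma chain_rep_nest:
  assumes rep: "chain_rep I n C D A" and ij: "i < j" "j < n"
  shows "C j \<subseteq> D i"
  using ij
proof (induction j)
  case 0 then show ?case by simp
next
  case (Suc k)
  have a: "C (Suc k) \<subseteq> D k" using rep Suc.prems(2) unfolding chain_rep_def by blast
  show ?case
  proof (cases "i = k")
    case True then show ?thesis using a by simp
  next
    case False
    then have "i < k" using Suc.prems(1) by simp
    then have "C k \<subseteq> D i" using Suc.IH Suc.prems(2) by simp
    moreover have "D k \<subseteq> C k" using rep Suc.prems(2) unfolding chain_rep_def by simp
    ultimately show ?thesis using a by blast
  qed
qed

lemma chain_rep_disj:
  assumes rep: "chain_rep I n C D A"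
  shows "disjoint_family_on (\<lambda>i. C i - D i) {..<n}"
  unfolding disjoint_family_on_def
proof (intro ballI impI)
  fix i j assume ij: "i \<in> {..<n}" "j \<in> {..<n}" "i \<noteq> j"
  show "(C i - D i) \<inter> (C j - D j) = {}"
  proof (cases "i < j")
    case True
    then have "C j \<subseteq> D i" using chain_rep_nest[OF rep] ij by simp
    then show ?thesis by blast
  next
    case False
    then have "j < i" using ij by simp
    then have "C i \<subseteq> D j" using chain_rep_nest[OF rep] ij by simp
    then show ?thesis by blast
  qed
qed

context chainctx
begin

lemma ivs_le_v:
  assumes sm: "submodular_on M v" and v0: "v {} = 0"
  shows "Cs \<subseteq> ivs I \<Longrightarrow> finite Cs \<Longrightarrow> {} \<notin> Cs \<Longrightarrow> disjoint Cs \<Longrightarrow>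
    (\<Sum>c\<in>Cs. muS v I c) \<le> v (\<Union>Cs)"
proof (induction "card Cs" arbitrary: Cs rule: less_induct)
  case less
  show ?case
  proof (cases "Cs = {}")
    case True
    then show ?thesis using v0 by simp
  next
    case False
    obtain c0 C0 D0 where
      p: "c0 \<in> Cs" "C0 \<in> I" "D0 \<in> I" "D0 \<subseteq> C0" "c0 = C0 - D0"
        "\<forall>c\<in>Cs. c \<subseteq> C0" "\<forall>c\<in>Cs - {c0}. c \<subseteq> D0"
      by (rule max_piece[OF less.prems(1,2) False less.prems(3,4)])
    let ?R = "Cs - {c0}"
    let ?X = "\<Union>Cs"
    have CsM: "Cs \<subseteq> sets M" using less.prems(1) ivs_sets by blast
    have XM: "?X \<in> sets M" by (rule sets.finite_Union[OF less.prems(2) CsM])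
    have RM: "\<Union>?R \<in> sets M" by (rule sets.finite_Union) (use less.prems(2) CsM in auto)
    have D0M: "D0 \<in> sets M" using p(3) Isub by blast
    have c0X: "C0 - D0 \<subseteq> ?X" using p(1) unfolding p(5) by blast
    have c0D: "c0 \<inter> D0 = {}" unfolding p(5) by blast
    have XU: "?X \<union> D0 = C0" using p(6) p(4) c0X by blast
    have XI: "?X \<inter> D0 = \<Union>?R"
    proof
      show "?X \<inter> D0 \<subseteq> \<Union>?R"
      proof
        fix y assume y: "y \<in> ?X \<inter> D0"
        then obtain c where c: "c \<in> Cs" "y \<in> c" by blast
        have "c \<noteq> c0" using c y c0D by blast
        then show "y \<in> \<Union>?R" using c by blast
      qed
      show "\<Union>?R \<subseteq> ?X \<inter> D0" using p(7) by blast
    qed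
    have smi: "v ?X + v D0 \<ge> v (?X \<union> D0) + v (?X \<inter> D0)"
      using sm XM D0M unfolding submodular_on_def by blast
    have smi2: "v ?X + v D0 \<ge> v C0 + v (\<Union>?R)" using smi unfolding XU XI .
    have cardR: "card ?R < card Cs" by (rule card_Diff1_less[OF less.prems(2) p(1)])
    have R1: "?R \<subseteq> ivs I" using less.prems(1) by blast
    have R2: "finite ?R" using less.prems(2) by simp
    have R3: "{} \<notin> ?R" using less.prems(3) by blast
    have R4: "disjoint ?R" using less.prems(4) by (rule pairwise_subset) blast
    have IH: "(\<Sum>c\<in>?R. muS v I c) \<le> v (\<Union>?R)"
      by (rule less.hyps[OF cardR R1 R2 R3 R4])
    have S: "(\<Sum>c\<in>Cs. muS v I c) = muS v I c0 + (\<Sum>c\<in>?R. muS v I c)"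
      by (rule sum.remove[OF less.prems(2) p(1)])
    have m0: "muS v I c0 = v C0 - v D0" unfolding p(5) by (rule muS_eq[OF p(2,3,4)])
    show ?thesis using S m0 IH smi2 by linarith
  qed
qed

lemma ivsE:
  assumes "c \<in> ivs I"
  obtains C D where "C \<in> I" "D \<in> I" "D \<subseteq> C" "c = C - D"
  using assms unfolding ivs_def by blast

lemma volume_ivs: "volume (ivs I) (\<lambda>c. ennreal (muS v I c))"
proof (rule volumeI)
  show "ennreal (muS v I {}) = 0" using muS_empty by simp
next
  fix a show "0 \<le> ennreal (muS v I a)" by simp
next
  fix Cs assume Cs: "Cs \<subseteq> ivs I" "disjoint Cs" "finite Cs" "\<Union>Cs \<in> ivs I"
  obtain C D where CD: "C \<in> I" "D \<in> I" "D \<subseteq> C" "\<Union>Cs = C - D"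
    by (rule ivsE[OF Cs(4)])
  let ?C' = "Cs - {{}}"
  have U': "\<Union>?C' = C - D" unfolding CD(4)[symmetric] by blast
  have "muS v I (\<Union>Cs) = v C - v D" unfolding CD(4) by (rule muS_eq[OF CD(1,2,3)])
  also have "\<dots> = (\<Sum>c\<in>?C'. muS v I c)"
  proof (rule ivs_additive)
    show "?C' \<subseteq> ivs I" using Cs(1) by blast
    show "finite ?C'" using Cs(3) by simp
    show "{} \<notin> ?C'" by blast
    show "disjoint ?C'" using Cs(2) by (rule pairwise_subset) blast
  qed (use CD U' in auto)
  also have "\<dots> = (\<Sum>c\<in>Cs. muS v I c)" by (rule sum_drop_empty[OF Cs(3), symmetric])
  finally have e: "muS v I (\<Union>Cs) = (\<Sum>c\<in>Cs. muS v I c)" .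
  have "(\<Sum>c\<in>Cs. ennreal (muS v I c)) = ennreal (\<Sum>c\<in>Cs. muS v I c)"
    by (rule sum_ennreal) (use Cs(1) muS_nonneg in blast)
  then show "ennreal (muS v I (\<Union>Cs)) = (\<Sum>c\<in>Cs. ennreal (muS v I c))" unfolding e by (rule sym)
qed

lemma rep_in_G:
  assumes vol: "volume S.generated_ring \<mu>" and ag: "\<forall>a\<in>ivs I. \<mu> a = ennreal (muS v I a)"
    and rep: "chain_rep I n C D A"
  shows "A \<in> S.generated_ring" "\<mu> A = ennreal (\<Sum>i<n. v (C i) - v (D i))"
    "0 \<le> (\<Sum>i<n. v (C i) - v (D i))"
proof -
  have el: "\<And>i. i < n \<Longrightarrow> C i \<in> I \<and> D i \<in> I \<and> D i \<subseteq> C i"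
    using rep unfolding chain_rep_def by blast
  have el2: "\<And>i. i < n \<Longrightarrow> C i - D i \<in> ivs I" using el unfolding ivs_def by blast
  have dj: "disjoint_family_on (\<lambda>i. C i - D i) {..<n}" by (rule chain_rep_disj[OF rep])
  have Aeq: "A = (\<Union>i\<in>{..<n}. C i - D i)" using rep unfolding chain_rep_def by blast
  have AG: "(\<Union>i\<in>{..<n}. C i - D i) \<in> S.generated_ring"
    by (rule S.generated_ring_disjoint_UNION)
       (use dj el2 in \<open>auto simp: disjoint_family_on_disjoint_image intro: S.generated_ringI_Basic\<close>)
  then show "A \<in> S.generated_ring" unfolding Aeq .
  have "\<mu> (\<Union>i\<in>{..<n}. C i - D i) = (\<Sum>i<n. \<mu> (C i - D i))"
    by (rule volume_finite_additive[OF vol]) (use el2 dj AG in \<open>auto intro: S.generated_ringI_Basic\<close>)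
  also have "\<dots> = (\<Sum>i<n. ennreal (v (C i) - v (D i)))"
  proof (rule sum.cong[OF refl])
    fix i assume "i \<in> {..<n}"
    then have i: "i < n" by simp
    then show "\<mu> (C i - D i) = ennreal (v (C i) - v (D i))"
      using ag el2[OF i] muS_eq[of "C i" "D i"] el[OF i] by simp
  qed
  also have "\<dots> = ennreal (\<Sum>i<n. v (C i) - v (D i))"
    by (rule sum_ennreal) (use el vmono' in auto)
  finally show "\<mu> A = ennreal (\<Sum>i<n. v (C i) - v (D i))" unfolding Aeq .
  show "0 \<le> (\<Sum>i<n. v (C i) - v (D i))"
    by (rule sum_nonneg) (use el vmono' in auto)
qed

lemma ex_mu: "\<exists>\<mu>. volume S.generated_ring \<mu> \<and> (\<forall>a\<in>ivs I. \<mu> a = ennreal (muS v I a))"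
  using S.extend_volume[OF volume_ivs] by blast

lemma mu_chain_rep:
  assumes rep: "chain_rep I n C D A"
  shows "mu_chain v I A = (\<Sum>i<n. v (C i) - v (D i))"
proof -
  obtain \<mu> where vol: "volume S.generated_ring \<mu>" and ag: "\<forall>a\<in>ivs I. \<mu> a = ennreal (muS v I a)"
    using ex_mu by blast
  note r1 = rep_in_G[OF vol ag rep]
  show ?thesis
    unfolding mu_chain_def
  proof (rule someI2)
    show "\<exists>n' C' D'. chain_rep I n' C' D' A \<and> (\<Sum>i<n. v (C i) - v (D i)) = (\<Sum>i<n'. v (C' i) - v (D' i))"
      using rep by blast
  next
    fix s assume "\<exists>n' C' D'. chain_rep I n' C' D' A \<and> s = (\<Sum>i<n'. v (C' i) - v (D' i))"
    then obtain n' C' D' where rep': "chain_rep I n' C' D' A" and s: "s = (\<Sum>i<n'. v (C' i) - v (D' i))"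
      by blast
    note r2 = rep_in_G[OF vol ag rep']
    have "ennreal s = ennreal (\<Sum>i<n. v (C i) - v (D i))" using r1(2) r2(2) s by simp
    then show "s = (\<Sum>i<n. v (C i) - v (D i))" using r1(3) r2(3) s by simp
  qed
qed

end




context chainctx
begin

lemma G_sets: "S.generated_ring \<subseteq> sets M"
proof
  fix x assume "x \<in> S.generated_ring"
  then obtain Cs where Cs: "finite Cs" "disjoint Cs" "Cs \<subseteq> ivs I" "x = \<Union>Cs"
    by (rule S.generated_ringE)
  have "Cs \<subseteq> sets M" using Cs(3) ivs_sets by blast
  then have "\<Union>Cs \<in> sets M" by (rule sets.finite_Union[OF Cs(1)])
  then show "x \<in> sets M" unfolding Cs(4) .
qed

lemma sigma_add:
  assumes sm: "submodular_on M v" and v0: "v {} = 0"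
    and dec: "\<forall>A. range A \<subseteq> sets M \<longrightarrow> decseq A \<longrightarrow> (\<lambda>n. v (A n)) \<longlonglongrightarrow> v (\<Inter>n. A n)"
  shows "sigma_additive_on (chain_algebra I) (mu_chain v I)"
proof -
  obtain \<mu> where vol: "volume S.generated_ring \<mu>" and ag: "\<forall>a\<in>ivs I. \<mu> a = ennreal (muS v I a)"
    using ex_mu by blast
  interpret R: ring_of_sets "space M" S.generated_ring by (rule S.generating_ring)
  have vsum: "\<And>Cs. Cs \<subseteq> S.generated_ring \<Longrightarrow> disjoint Cs \<Longrightarrow> finite Cs \<Longrightarrow>
      \<Union>Cs \<in> S.generated_ring \<Longrightarrow> \<mu> (\<Union>Cs) = (\<Sum>c\<in>Cs. \<mu> c)"
    using vol unfolding volume_def by blast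
  have bound: "\<mu> A \<le> ennreal (v A)" if A: "A \<in> S.generated_ring" for A
  proof -
    obtain Cs where Cs: "finite Cs" "disjoint Cs" "Cs \<subseteq> ivs I" "A = \<Union>Cs"
      by (rule S.generated_ringE[OF A])
    have CsG: "Cs \<subseteq> S.generated_ring" using Cs(3) S.generated_ringI_Basic by blast
    have UG: "\<Union>Cs \<in> S.generated_ring" using A unfolding Cs(4) .
    have "\<mu> A = (\<Sum>c\<in>Cs. \<mu> c)" unfolding Cs(4) by (rule vsum[OF CsG Cs(2,1) UG])
    also have "\<dots> = (\<Sum>c\<in>Cs. ennreal (muS v I c))"
      by (rule sum.cong[OF refl]) (use ag Cs(3) in blast)
    also have "\<dots> = ennreal (\<Sum>c\<in>Cs. muS v I c)"
      by (rule sum_ennreal) (use Cs(3) muS_nonneg in blast)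
    also have "\<dots> \<le> ennreal (v A)"
    proof (rule ennreal_leI)
      let ?C' = "Cs - {{}}"
      have "(\<Sum>c\<in>Cs. muS v I c) = (\<Sum>c\<in>?C'. muS v I c)" by (rule sum_drop_empty[OF Cs(1)])
      also have "\<dots> \<le> v (\<Union>?C')"
      proof (rule ivs_le_v[OF sm v0])
        show "?C' \<subseteq> ivs I" using Cs(3) by blast
        show "finite ?C'" using Cs(1) by simp
        show "{} \<notin> ?C'" by blast
        show "disjoint ?C'" using Cs(2) by (rule pairwise_subset) blast
      qed
      also have "\<Union>?C' = A" unfolding Cs(4) by blast
      finally show "(\<Sum>c\<in>Cs. muS v I c) \<le> v A" .
    qed
    finally show ?thesis .
  qed
  have pos: "positive S.generated_ring \<mu>"
    unfolding positive_def using volume_empty[OF vol] by simp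
  have add: "additive S.generated_ring \<mu>"
    unfolding additive_def
  proof (intro ballI impI)
    fix x y assume x: "x \<in> S.generated_ring" and y: "y \<in> S.generated_ring" and xy: "x \<inter> y = {}"
    show "\<mu> (x \<union> y) = \<mu> x + \<mu> y"
    proof (cases "x = y")
      case True
      then have "x = {}" "y = {}" using xy by auto
      then show ?thesis using volume_empty[OF vol] by simp
    next
      case False
      have dj: "disjoint {x, y}" using xy False
        by (simp add: pairwise_insert disjnt_def Int_commute)
      have "\<mu> (\<Union>{x, y}) = (\<Sum>c\<in>{x, y}. \<mu> c)"
        by (rule vsum) (use x y dj R.Un[OF x y] in auto)
      then show ?thesis using False by simp
    qed
  qed
  have fin: "\<forall>A\<in>S.generated_ring. \<mu> A \<noteq> \<infinity>"
  proof
    fix A assume "A \<in> S.generated_ring"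
    then have "\<mu> A \<le> ennreal (v A)" by (rule bound)
    then have "\<mu> A < top" using ennreal_less_top by (rule le_less_trans)
    then show "\<mu> A \<noteq> \<infinity>" by simp
  qed
  have cont: "(\<lambda>i. \<mu> (A i)) \<longlonglongrightarrow> 0"
    if A: "range A \<subseteq> S.generated_ring" "decseq A" "(\<Inter>i. A i) = {}" for A :: "nat \<Rightarrow> 'a set"
  proof -
    have AM: "range A \<subseteq> sets M" using A(1) G_sets by blast
    have "(\<lambda>n. v (A n)) \<longlonglongrightarrow> v (\<Inter>n. A n)" using dec AM A(2) by blast
    then have "(\<lambda>n. v (A n)) \<longlonglongrightarrow> 0" using A(3) v0 by simp
    then have t: "(\<lambda>n. ennreal (v (A n))) \<longlonglongrightarrow> ennreal 0" by (rule tendsto_ennrealI)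
    show ?thesis
    proof (rule tendsto_sandwich[of "\<lambda>_. 0" _ sequentially "\<lambda>n. ennreal (v (A n))"])
      show "\<forall>\<^sub>F n in sequentially. 0 \<le> \<mu> (A n)" by simp
      show "\<forall>\<^sub>F n in sequentially. \<mu> (A n) \<le> ennreal (v (A n))"
        using bound A(1) by (intro always_eventually) blast
      show "((\<lambda>_. 0) \<longlongrightarrow> (0::ennreal)) sequentially" by simp
      show "(\<lambda>n. ennreal (v (A n))) \<longlonglongrightarrow> 0" using t by simp
    qed
  qed
  have ca: "countably_additive S.generated_ring \<mu>"
    by (rule R.empty_continuous_imp_countably_additive[OF pos add fin cont])
  have Jf: "X \<in> S.generated_ring \<and> \<mu> X = ennreal (mu_chain v I X) \<and> 0 \<le> mu_chain v I X"
    if X: "X \<in> chain_algebra I" for X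
  proof -
    obtain n C D where rep: "chain_rep I n C D X" using X unfolding chain_algebra_def by blast
    show ?thesis using rep_in_G[OF vol ag rep] mu_chain_rep[OF rep] by simp
  qed
  show ?thesis
    unfolding sigma_additive_on_def
  proof (intro allI impI)
    fix A :: "nat \<Rightarrow> 'a set"
    assume A: "range A \<subseteq> chain_algebra I" "disjoint_family A" "(\<Union>i. A i) \<in> chain_algebra I"
    have Ai: "\<And>i. A i \<in> chain_algebra I" using A(1) by blast
    have AG: "range A \<subseteq> S.generated_ring" using Jf Ai by blast
    have UG: "(\<Union>i. A i) \<in> S.generated_ring" using Jf[OF A(3)] by blast
    have e1: "\<And>i. \<mu> (A i) = ennreal (mu_chain v I (A i))" using Jf Ai by blast
    have e2: "\<mu> (\<Union>i. A i) = ennreal (mu_chain v I (\<Union>i. A i))" using Jf[OF A(3)] by blast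
    have nn1: "\<And>i. 0 \<le> mu_chain v I (A i)" using Jf Ai by blast
    have nn2: "0 \<le> mu_chain v I (\<Union>i. A i)" using Jf[OF A(3)] by blast
    have "(\<Sum>i. \<mu> (A i)) = \<mu> (\<Union>i. A i)"
      using ca AG A(2) UG unfolding countably_additive_def by blast
    then have "(\<Sum>i. ennreal (mu_chain v I (A i))) = ennreal (mu_chain v I (\<Union>i. A i))"
      unfolding e1 e2 .
    then have "(\<lambda>i. ennreal (mu_chain v I (A i))) sums ennreal (mu_chain v I (\<Union>i. A i))"
      using summable_sums[OF summableI, of "\<lambda>i. ennreal (mu_chain v I (A i))"] by simp
    then show "(\<lambda>i. mu_chain v I (A i)) sums mu_chain v I (\<Union>i. A i)"
      using sums_ennreal[of "\<lambda>i. mu_chain v I (A i)", OF nn1 nn2] by simp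
  qed
qed

end




lemma cg_facts:
  assumes "I \<in> chain_generators M"
  shows "I \<subseteq> sets M" "\<forall>A\<in>I. \<forall>B\<in>I. A \<subseteq> B \<or> B \<subseteq> A" "{} \<in> I" "space M \<in> I"
    "sigma_sets (space M) I = sets M"
  using assms unfolding chain_generators_def by simp_all

lemma ext_chain:
  fixes M :: "'a measure" and L U :: "nat \<Rightarrow> 'a set"
  assumes I0: "I0 \<in> chain_generators M"
    and LM: "\<And>k. L k \<in> sets M" and UM: "\<And>k. U k \<in> sets M" and LU: "\<And>k. L k \<subseteq> U k"
    and ord: "\<And>k k'. k < k' \<Longrightarrow> U k \<subseteq> L k' \<or> U k' \<subseteq> L k"
    and cov: "space M \<subseteq> (\<Union>k. U k - L k)"
  shows "insert {} (insert (space M) {L k \<union> (B \<inter> U k) | k B. B \<in> I0}) \<in> chain_generators M"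
    (is "?I \<in> _")
proof -
  note I0f = cg_facts[OF I0]
  define J where "J = {L k \<union> (B \<inter> U k) | k B. B \<in> I0}"
  have IJ: "?I = insert {} (insert (space M) J)" unfolding J_def ..
  have Jm: "\<exists>k B. B \<in> I0 \<and> X = L k \<union> (B \<inter> U k)" if "X \<in> J" for X
    using that unfolding J_def by blast
  have JM: "J \<subseteq> sets M"
  proof
    fix X assume "X \<in> J"
    then obtain k B where kB: "B \<in> I0" "X = L k \<union> (B \<inter> U k)" using Jm by blast
    have "B \<in> sets M" using kB(1) I0f(1) by blast
    then have "L k \<union> (B \<inter> U k) \<in> sets M" using LM UM by blast
    then show "X \<in> sets M" unfolding kB(2) .
  qed
  have IM: "?I \<subseteq> sets M" unfolding IJ using JM by blast
  have Isp: "\<And>X. X \<in> ?I \<Longrightarrow> X \<subseteq> space M" using IM sets.sets_into_space by blast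
  have Jch: "X \<subseteq> Y \<or> Y \<subseteq> X" if X: "X \<in> J" and Y: "Y \<in> J" for X Y
  proof -
    obtain k B where kB: "B \<in> I0" "X = L k \<union> (B \<inter> U k)" using Jm[OF X] by blast
    obtain k' B' where kB': "B' \<in> I0" "Y = L k' \<union> (B' \<inter> U k')" using Jm[OF Y] by blast
    have XU: "X \<subseteq> U k" unfolding kB(2) using LU by blast
    have YU: "Y \<subseteq> U k'" unfolding kB'(2) using LU by blast
    have XL: "L k \<subseteq> X" unfolding kB(2) by blast
    have YL: "L k' \<subseteq> Y" unfolding kB'(2) by blast
    consider "k = k'" | "k < k'" | "k' < k" by linarith
    then show ?thesis
    proof cases
      case 1
      have "B \<subseteq> B' \<or> B' \<subseteq> B" using I0f(2) kB(1) kB'(1) by blast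
      moreover have "L k \<union> (B \<inter> U k) \<subseteq> L k \<union> (B' \<inter> U k)" if "B \<subseteq> B'" using that by blast
      moreover have "L k \<union> (B' \<inter> U k) \<subseteq> L k \<union> (B \<inter> U k)" if "B' \<subseteq> B" using that by blast
      ultimately show ?thesis unfolding kB(2) kB'(2) 1 by blast
    next
      case 2
      then have "U k \<subseteq> L k' \<or> U k' \<subseteq> L k" by (rule ord)
      then show ?thesis using XU YU XL YL by blast
    next
      case 3
      then have "U k' \<subseteq> L k \<or> U k \<subseteq> L k'" by (rule ord)
      then show ?thesis using XU YU XL YL by blast
    qed
  qed
  have Ich: "\<forall>X\<in>?I. \<forall>Y\<in>?I. X \<subseteq> Y \<or> Y \<subseteq> X"
  proof (intro ballI)
    fix X Y assume X: "X \<in> ?I" and Y: "Y \<in> ?I"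
    show "X \<subseteq> Y \<or> Y \<subseteq> X"
    proof (cases "X = {} \<or> Y = {} \<or> X = space M \<or> Y = space M")
      case True
      then show ?thesis using Isp[OF X] Isp[OF Y] by blast
    next
      case False
      then have "X \<in> J" "Y \<in> J" using X Y unfolding IJ by blast+
      then show ?thesis by (rule Jch)
    qed
  qed
  have sig: "sigma_sets (space M) ?I = sets M"
  proof
    show "sigma_sets (space M) ?I \<subseteq> sets M" by (rule sets.sigma_sets_subset[OF IM])
    have IP: "?I \<subseteq> Pow (space M)" using Isp by blast
    interpret SA: sigma_algebra "space M" "sigma_sets (space M) ?I"
      by (rule sigma_algebra_sigma_sets[OF IP])
    have inS: "\<And>X. X \<in> ?I \<Longrightarrow> X \<in> sigma_sets (space M) ?I" by (rule sigma_sets.Basic)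
    have "I0 \<subseteq> sigma_sets (space M) ?I"
    proof
      fix B assume B: "B \<in> I0"
      have Bsp: "B \<subseteq> space M" using B I0f(1) sets.sets_into_space by blast
      have t1: "L k \<union> (B \<inter> U k) \<in> ?I" for k using B by blast
      have Lk: "L k = L k \<union> ({} \<inter> U k)" for k by simp
      have t2: "L k \<in> ?I" for k
      proof -
        have "L k \<union> ({} \<inter> U k) \<in> ?I" using I0f(3) by blast
        then show ?thesis using Lk[of k] by simp
      qed
      have Beq: "B = (\<Union>k. (L k \<union> (B \<inter> U k)) - L k)"
      proof
        show "B \<subseteq> (\<Union>k. (L k \<union> (B \<inter> U k)) - L k)"
        proof
          fix y assume y: "y \<in> B"
          then have "y \<in> (\<Union>k. U k - L k)" using Bsp cov by blast
          then obtain k where "y \<in> U k" "y \<notin> L k" by blast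
          then show "y \<in> (\<Union>k. (L k \<union> (B \<inter> U k)) - L k)" using y by blast
        qed
        show "(\<Union>k. (L k \<union> (B \<inter> U k)) - L k) \<subseteq> B" by blast
      qed
      have "(\<Union>k. (L k \<union> (B \<inter> U k)) - L k) \<in> sigma_sets (space M) ?I"
      proof (rule SA.countable_UN)
        show "range (\<lambda>k. (L k \<union> (B \<inter> U k)) - L k) \<subseteq> sigma_sets (space M) ?I"
          using inS[OF t1] inS[OF t2] by blast
      qed
      then show "B \<in> sigma_sets (space M) ?I" using Beq by simp
    qed
    then have "sigma_sets (space M) I0 \<subseteq> sigma_sets (space M) ?I" by (rule sigma_sets_mono)
    then show "sets M \<subseteq> sigma_sets (space M) ?I" unfolding I0f(5) .
  qed
  show ?thesis
    unfolding chain_generators_def mem_Collect_eq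
    using IM Ich sig by blast
qed




lemma chainctx_of:
  assumes "I \<in> chain_generators M" "nondecreasing_on M v"
  shows "chainctx M I v"
  using cg_facts[OF assms(1)] assms(2) by unfold_locales blast+

lemma rep1:
  assumes "X \<in> I" "Y \<in> I" "Y \<subseteq> X"
  shows "chain_rep I 1 (\<lambda>_. X) (\<lambda>_. Y) (X - Y)"
  unfolding chain_rep_def using assms by (simp add: lessThan_Suc)

lemma inc_case:
  fixes M :: "'a measure" and v :: "'a set \<Rightarrow> real" and A :: "nat \<Rightarrow> 'a set"
  assumes gen: "chain_generators M \<noteq> {}" and vm: "nondecreasing_on M v" and v0: "v {} = 0"
    and cc: "continuous_capacity M v"
    and AM': "range A \<subseteq> sets M" and inc: "incseq A"
  shows "(\<lambda>n. v (A n)) \<longlonglongrightarrow> v (\<Union>n. A n)"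
proof -
  obtain I0 where I0: "I0 \<in> chain_generators M" using gen by blast
  define Lo where "Lo m = (case m of 0 \<Rightarrow> {} | Suc n \<Rightarrow> A n)" for m
  define L where "L k = (case k of 0 \<Rightarrow> (\<Union>n. A n) | Suc m \<Rightarrow> Lo m)" for k
  define U where "U k = (case k of 0 \<Rightarrow> space M | Suc m \<Rightarrow> A m)" for k
  have AM: "\<And>n. A n \<in> sets M" using AM' by blast
  have UAM: "(\<Union>n. A n) \<in> sets M" using sets.countable_UN[OF AM'] by simp
  have LoM: "Lo m \<in> sets M" for m by (cases m) (simp_all add: Lo_def AM)
  have LM: "L k \<in> sets M" for k by (cases k) (simp_all add: L_def UAM LoM)
  have UM: "U k \<in> sets M" for k by (cases k) (simp_all add: U_def AM)
  have LoA: "Lo m \<subseteq> A m" for m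
  proof (cases m)
    case (Suc n) then show ?thesis using inc unfolding Lo_def by (simp add: incseq_SucD)
  qed (simp add: Lo_def)
  have LU: "L k \<subseteq> U k" for k
  proof (cases k)
    case 0 then show ?thesis unfolding L_def U_def using UAM sets.sets_into_space by simp
  next
    case (Suc m) then show ?thesis unfolding L_def U_def using LoA by simp
  qed
  have Lo_ge: "A m \<subseteq> Lo m'" if "m < m'" for m m'
  proof (cases m')
    case 0 then show ?thesis using that by simp
  next
    case (Suc n)
    then have "m \<le> n" using that by simp
    then have "A m \<subseteq> A n" using inc by (simp add: incseqD)
    then show ?thesis unfolding Lo_def Suc by simp
  qed
  have ord: "U k \<subseteq> L k' \<or> U k' \<subseteq> L k" if kk: "k < k'" for k k'
  proof (cases k)
    case 0
    then obtain m' where "k' = Suc m'" using kk by (cases k') auto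
    then have "U k' \<subseteq> L k" unfolding U_def L_def 0 by auto
    then show ?thesis by blast
  next
    case (Suc m)
    then obtain m' where m': "k' = Suc m'" "m < m'" using kk by (cases k') auto
    then have "U k \<subseteq> L k'" unfolding U_def L_def Suc using Lo_ge by simp
    then show ?thesis by blast
  qed
  have ex_m: "\<exists>m. y \<in> A m \<and> y \<notin> Lo m" if "y \<in> A n" for y n
    using that
  proof (induction n)
    case 0 then show ?case by (intro exI[of _ 0]) (simp add: Lo_def)
  next
    case (Suc n)
    show ?case
    proof (cases "y \<in> A n")
      case True then show ?thesis by (rule Suc.IH)
    next
      case False then show ?thesis using Suc.prems by (intro exI[of _ "Suc n"]) (simp add: Lo_def)
    qed
  qed
  have cov: "space M \<subseteq> (\<Union>k. U k - L k)"
  proof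
    fix y assume y: "y \<in> space M"
    show "y \<in> (\<Union>k. U k - L k)"
    proof (cases "y \<in> (\<Union>n. A n)")
      case True
      then obtain n where "y \<in> A n" by blast
      then obtain m where "y \<in> A m" "y \<notin> Lo m" using ex_m by blast
      then have "y \<in> U (Suc m) - L (Suc m)" unfolding U_def L_def by simp
      then show ?thesis by blast
    next
      case False
      then have "y \<in> U 0 - L 0" unfolding U_def L_def using y by simp
      then show ?thesis by blast
    qed
  qed
  let ?I = "insert {} (insert (space M) {L k \<union> (B \<inter> U k) | k B. B \<in> I0})"
  have II: "?I \<in> chain_generators M" by (rule ext_chain[OF I0 LM UM LU ord cov])
  interpret CC: chainctx M ?I v by (rule chainctx_of[OF II vm])
  have sa: "sigma_additive_on (chain_algebra ?I) (mu_chain v ?I)"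
    using cc II unfolding continuous_capacity_def by blast
  have I0f: "{} \<in> I0" "space M \<in> I0" using cg_facts[OF I0] by simp_all
  have LI: "L k \<in> ?I" for k
  proof -
    have "L k \<union> ({} \<inter> U k) \<in> ?I" using I0f(1) by blast
    then show ?thesis by simp
  qed
  have UI: "U k \<in> ?I" for k
  proof -
    have "L k \<union> (space M \<inter> U k) \<in> ?I" using I0f(2) by blast
    moreover have "L k \<union> (space M \<inter> U k) = U k" using LU[of k] UM[of k] sets.sets_into_space by blast
    ultimately show ?thesis by simp
  qed
  define P where "P m = A m - Lo m" for m
  have repP: "chain_rep ?I 1 (\<lambda>_. A m) (\<lambda>_. Lo m) (P m)" for m
    unfolding P_def
    by (rule rep1) (use LI[of "Suc m"] UI[of "Suc m"] LoA in \<open>simp_all add: L_def U_def\<close>)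
  have muP: "mu_chain v ?I (P m) = v (A m) - v (Lo m)" for m
    using CC.mu_chain_rep[OF repP[of m]] by simp
  have UP: "(\<Union>m. P m) = (\<Union>n. A n) - {}"
  proof
    show "(\<Union>m. P m) \<subseteq> (\<Union>n. A n) - {}" unfolding P_def by blast
    show "(\<Union>n. A n) - {} \<subseteq> (\<Union>m. P m)"
    proof
      fix y assume "y \<in> (\<Union>n. A n) - {}"
      then obtain n where "y \<in> A n" by blast
      then obtain m where "y \<in> A m" "y \<notin> Lo m" using ex_m by blast
      then show "y \<in> (\<Union>m. P m)" unfolding P_def by blast
    qed
  qed
  have repU: "chain_rep ?I 1 (\<lambda>_. \<Union>n. A n) (\<lambda>_. {}) (\<Union>m. P m)"
    unfolding UP by (rule rep1) (use LI[of 0] in \<open>simp_all add: L_def\<close>)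
  have muU: "mu_chain v ?I (\<Union>m. P m) = v (\<Union>n. A n)"
    using CC.mu_chain_rep[OF repU] v0 by simp
  have disj: "disjoint_family P"
    unfolding disjoint_family_on_def
  proof (intro ballI impI)
    fix m m' :: nat assume "m \<noteq> m'"
    then consider "m < m'" | "m' < m" by linarith
    then show "P m \<inter> P m' = {}"
    proof cases
      case 1 then show ?thesis using Lo_ge[OF 1] unfolding P_def by blast
    next
      case 2 then show ?thesis using Lo_ge[OF 2] unfolding P_def by blast
    qed
  qed
  have PJ: "range P \<subseteq> chain_algebra ?I" unfolding chain_algebra_def using repP by blast
  have UJ: "(\<Union>m. P m) \<in> chain_algebra ?I" unfolding chain_algebra_def using repU by blast
  have "(\<lambda>m. mu_chain v ?I (P m)) sums mu_chain v ?I (\<Union>m. P m)"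
    using sa PJ disj UJ unfolding sigma_additive_on_def by blast
  then have s: "(\<lambda>m. v (A m) - v (Lo m)) sums v (\<Union>n. A n)" unfolding muP muU .
  have part: "(\<Sum>m<Suc n. v (A m) - v (Lo m)) = v (A n)" for n
  proof (induction n)
    case 0 then show ?case using v0 by (simp add: Lo_def)
  next
    case (Suc n)
    have "(\<Sum>m<Suc (Suc n). v (A m) - v (Lo m)) = (\<Sum>m<Suc n. v (A m) - v (Lo m)) + (v (A (Suc n)) - v (Lo (Suc n)))"
      by simp
    also have "\<dots> = v (A (Suc n))" using Suc.IH by (simp add: Lo_def)
    finally show ?case .
  qed
  have "(\<lambda>n. \<Sum>m<n. v (A m) - v (Lo m)) \<longlonglongrightarrow> v (\<Union>n. A n)" using s unfolding sums_def .
  then have "(\<lambda>n. \<Sum>m<Suc n. v (A m) - v (Lo m)) \<longlonglongrightarrow> v (\<Union>n. A n)" by (rule LIMSEQ_Suc)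
  then show ?thesis unfolding part .
qed




lemma dec_case:
  fixes M :: "'a measure" and v :: "'a set \<Rightarrow> real" and A :: "nat \<Rightarrow> 'a set"
  assumes gen: "chain_generators M \<noteq> {}" and vm: "nondecreasing_on M v" and v0: "v {} = 0"
    and cc: "continuous_capacity M v"
    and AM': "range A \<subseteq> sets M" and dec: "decseq A"
  shows "(\<lambda>n. v (A n)) \<longlonglongrightarrow> v (\<Inter>n. A n)"
proof -
  obtain I0 where I0: "I0 \<in> chain_generators M" using gen by blast
  define Up where "Up m = (case m of 0 \<Rightarrow> space M | Suc n \<Rightarrow> A n)" for m
  define L where "L k = (case k of 0 \<Rightarrow> {} | Suc m \<Rightarrow> A m)" for k
  define U where "U k = (case k of 0 \<Rightarrow> (\<Inter>n. A n) | Suc m \<Rightarrow> Up m)" for k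
  have AM: "\<And>n. A n \<in> sets M" using AM' by blast
  have IAM: "(\<Inter>n. A n) \<in> sets M" using sets.countable_INT[OF AM'] by simp
  have UpM: "Up m \<in> sets M" for m by (cases m) (simp_all add: Up_def AM)
  have LM: "L k \<in> sets M" for k by (cases k) (simp_all add: L_def AM)
  have UM: "U k \<in> sets M" for k by (cases k) (simp_all add: U_def IAM UpM)
  have AUp: "A m \<subseteq> Up m" for m
  proof (cases m)
    case 0 then show ?thesis unfolding Up_def using sets.sets_into_space[OF AM[of 0]] by simp
  next
    case (Suc n) then show ?thesis using dec unfolding Up_def by (simp add: decseq_SucD)
  qed
  have LU: "L k \<subseteq> U k" for k
    by (cases k) (simp_all add: L_def U_def AUp)
  have Up_le: "Up m' \<subseteq> A m" if "m < m'" for m m'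
  proof (cases m')
    case 0 then show ?thesis using that by simp
  next
    case (Suc n)
    then have "m \<le> n" using that by simp
    then have "A n \<subseteq> A m" using dec by (simp add: decseqD)
    then show ?thesis unfolding Up_def Suc by simp
  qed
  have ord: "U k \<subseteq> L k' \<or> U k' \<subseteq> L k" if kk: "k < k'" for k k'
  proof (cases k)
    case 0
    then obtain m' where m': "k' = Suc m'" using kk by (cases k') auto
    have "(\<Inter>n. A n) \<subseteq> A m'" by blast
    then have "U k \<subseteq> L k'" unfolding U_def L_def 0 m' by simp
    then show ?thesis by blast
  next
    case (Suc m)
    then obtain m' where m': "k' = Suc m'" "m < m'" using kk by (cases k') auto
    then have "U k' \<subseteq> L k" unfolding U_def L_def Suc using Up_le by simp
    then show ?thesis by blast
  qed
  have ex_m: "\<exists>m. y \<notin> A m \<and> y \<in> Up m" if "y \<notin> A n" "y \<in> space M" for y n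
    using that
  proof (induction n)
    case 0 then show ?case by (intro exI[of _ 0]) (simp add: Up_def)
  next
    case (Suc n)
    show ?case
    proof (cases "y \<in> A n")
      case False then show ?thesis using Suc.IH Suc.prems(2) by blast
    next
      case True then show ?thesis using Suc.prems by (intro exI[of _ "Suc n"]) (simp add: Up_def)
    qed
  qed
  have cov: "space M \<subseteq> (\<Union>k. U k - L k)"
  proof
    fix y assume y: "y \<in> space M"
    show "y \<in> (\<Union>k. U k - L k)"
    proof (cases "y \<in> (\<Inter>n. A n)")
      case False
      then obtain n where "y \<notin> A n" by blast
      then obtain m where "y \<notin> A m" "y \<in> Up m" using ex_m y by blast
      then have "y \<in> U (Suc m) - L (Suc m)" unfolding U_def L_def by simp
      then show ?thesis by blast
    next
      case True
      then have "y \<in> U 0 - L 0" unfolding U_def L_def by simp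
      then show ?thesis by blast
    qed
  qed
  let ?I = "insert {} (insert (space M) {L k \<union> (B \<inter> U k) | k B. B \<in> I0})"
  have II: "?I \<in> chain_generators M" by (rule ext_chain[OF I0 LM UM LU ord cov])
  interpret CC: chainctx M ?I v by (rule chainctx_of[OF II vm])
  have sa: "sigma_additive_on (chain_algebra ?I) (mu_chain v ?I)"
    using cc II unfolding continuous_capacity_def by blast
  have I0f: "{} \<in> I0" "space M \<in> I0" using cg_facts[OF I0] by simp_all
  have LI: "L k \<in> ?I" for k
  proof -
    have "L k \<union> ({} \<inter> U k) \<in> ?I" using I0f(1) by blast
    then show ?thesis by simp
  qed
  have UI: "U k \<in> ?I" for k
  proof -
    have "L k \<union> (space M \<inter> U k) \<in> ?I" using I0f(2) by blast
    moreover have "L k \<union> (space M \<inter> U k) = U k" using LU[of k] UM[of k] sets.sets_into_space by blast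
    ultimately show ?thesis by simp
  qed
  have AI: "A m \<in> ?I" for m using LI[of "Suc m"] by (simp add: L_def)
  have IAI: "(\<Inter>n. A n) \<in> ?I" using UI[of 0] by (simp add: U_def)
  define P where "P m = A m - A (Suc m)" for m
  have repP: "chain_rep ?I 1 (\<lambda>_. A m) (\<lambda>_. A (Suc m)) (P m)" for m
    unfolding P_def by (rule rep1[OF AI AI]) (use dec in \<open>simp add: decseq_SucD\<close>)
  have muP: "mu_chain v ?I (P m) = v (A m) - v (A (Suc m))" for m
    using CC.mu_chain_rep[OF repP[of m]] by simp
  have ex_m2: "\<exists>m. y \<in> A m \<and> y \<notin> A (Suc m)" if "y \<in> A 0" "y \<notin> A n" for y n
    using that
  proof (induction n)
    case 0 then show ?case by simp
  next
    case (Suc n)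
    show ?case
    proof (cases "y \<in> A n")
      case True then show ?thesis using Suc.prems by blast
    next
      case False then show ?thesis using Suc.IH Suc.prems(1) by blast
    qed
  qed
  have A0: "A m \<subseteq> A 0" for m using dec by (simp add: decseqD)
  have UP: "(\<Union>m. P m) = A 0 - (\<Inter>n. A n)"
  proof
    show "(\<Union>m. P m) \<subseteq> A 0 - (\<Inter>n. A n)" unfolding P_def using A0 by blast
    show "A 0 - (\<Inter>n. A n) \<subseteq> (\<Union>m. P m)"
    proof
      fix y assume y: "y \<in> A 0 - (\<Inter>n. A n)"
      then obtain n where "y \<notin> A n" by blast
      then obtain m where "y \<in> A m" "y \<notin> A (Suc m)" using ex_m2 y by blast
      then show "y \<in> (\<Union>m. P m)" unfolding P_def by blast
    qed
  qed
  have repU: "chain_rep ?I 1 (\<lambda>_. A 0) (\<lambda>_. \<Inter>n. A n) (\<Union>m. P m)"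
    unfolding UP by (rule rep1[OF AI IAI]) blast
  have muU: "mu_chain v ?I (\<Union>m. P m) = v (A 0) - v (\<Inter>n. A n)"
    using CC.mu_chain_rep[OF repU] by simp
  have Ple: "P m' \<subseteq> A (Suc m)" if "m < m'" for m m'
  proof -
    have "A m' \<subseteq> A (Suc m)" using dec that by (simp add: decseqD)
    then show ?thesis unfolding P_def by blast
  qed
  have disj: "disjoint_family P"
    unfolding disjoint_family_on_def
  proof (intro ballI impI)
    fix m m' :: nat assume "m \<noteq> m'"
    then consider "m < m'" | "m' < m" by linarith
    then show "P m \<inter> P m' = {}"
    proof cases
      case 1 then show ?thesis using Ple[OF 1] unfolding P_def by blast
    next
      case 2 then show ?thesis using Ple[OF 2] unfolding P_def by blast
    qed
  qed
  have PJ: "range P \<subseteq> chain_algebra ?I" unfolding chain_algebra_def using repP by blast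
  have UJ: "(\<Union>m. P m) \<in> chain_algebra ?I" unfolding chain_algebra_def using repU by blast
  have "(\<lambda>m. mu_chain v ?I (P m)) sums mu_chain v ?I (\<Union>m. P m)"
    using sa PJ disj UJ unfolding sigma_additive_on_def by blast
  then have s: "(\<lambda>m. v (A m) - v (A (Suc m))) sums (v (A 0) - v (\<Inter>n. A n))" unfolding muP muU .
  have "(\<lambda>n. \<Sum>m<n. v (A m) - v (A (Suc m))) \<longlonglongrightarrow> v (A 0) - v (\<Inter>n. A n)" using s unfolding sums_def .
  moreover have "(\<lambda>n. \<Sum>m<n. v (A m) - v (A (Suc m))) = (\<lambda>n. v (A 0) - v (A n))"
    by (rule ext) (rule sum_lessThan_telescope'[where f = "\<lambda>m. v (A m)"])
  ultimately have "(\<lambda>n. v (A 0) - v (A n)) \<longlonglongrightarrow> v (A 0) - v (\<Inter>n. A n)"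
    by simp
  then have "(\<lambda>n. v (A 0) - (v (A 0) - v (A n))) \<longlonglongrightarrow> v (A 0) - (v (A 0) - v (\<Inter>n. A n))"
    by (rule tendsto_diff[OF tendsto_const])
  then show ?thesis by simp
qed

theorem proposition2:
  fixes M :: "'a measure" and v :: "'a set \<Rightarrow> real"
  assumes "chain_generators M \<noteq> {}"
    and "nondecreasing_on M v" and "submodular_on M v" and "v {} = 0"
  shows "continuous_capacity M v \<longleftrightarrow>
    ((\<forall>A. range A \<subseteq> sets M \<longrightarrow> incseq A \<longrightarrow> (\<lambda>n. v (A n)) \<longlonglongrightarrow> v (\<Union>n. A n)) \<and>
     (\<forall>A. range A \<subseteq> sets M \<longrightarrow> decseq A \<longrightarrow> (\<lambda>n. v (A n)) \<longlonglongrightarrow> v (\<Inter>n. A n)))"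
proof
  assume cc: "continuous_capacity M v"
  show "(\<forall>A. range A \<subseteq> sets M \<longrightarrow> incseq A \<longrightarrow> (\<lambda>n. v (A n)) \<longlonglongrightarrow> v (\<Union>n. A n)) \<and>
     (\<forall>A. range A \<subseteq> sets M \<longrightarrow> decseq A \<longrightarrow> (\<lambda>n. v (A n)) \<longlonglongrightarrow> v (\<Inter>n. A n))"
    using inc_case[OF assms(1,2,4) cc] dec_case[OF assms(1,2,4) cc] by blast
next
  assume h: "(\<forall>A. range A \<subseteq> sets M \<longrightarrow> incseq A \<longrightarrow> (\<lambda>n. v (A n)) \<longlonglongrightarrow> v (\<Union>n. A n)) \<and>
     (\<forall>A. range A \<subseteq> sets M \<longrightarrow> decseq A \<longrightarrow> (\<lambda>n. v (A n)) \<longlonglongrightarrow> v (\<Inter>n. A n))"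
  show "continuous_capacity M v"
    unfolding continuous_capacity_def
  proof
    fix I assume I: "I \<in> chain_generators M"
    interpret CC: chainctx M I v by (rule chainctx_of[OF I assms(2)])
    show "sigma_additive_on (chain_algebra I) (mu_chain v I)"
      by (rule CC.sigma_add[OF assms(3,4)]) (use h in blast)
  qed
qed


end
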